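(* Let $n\ge2$, let $u$ be a polar $n$-complex number, and define $\cos u=\sum_{j\ge0}(-1)^ju^{2j}/(2j)!$ and $\sin u=\sum_{j\ge0}(-1)^ju^{2j+1}/(2j+1)!$. Then for even $n$ $$\cos u=e_+\cos v_++e_-\cos v_-+\sum_{k=1}^{n/2-1}\big(e_k\cos v_k\cosh\tilde v_k-\tilde e_k\sin v_k\sinh\tilde v_k\big),$$ $$\sin u=e_+\sin v_++e_-\sin v_-+\sum_{k=1}^{n/2-1}\big(e_k\sin v_k\cosh\tilde v_k+\tilde e_k\cos v_k\sinh\tilde v_k\big),$$ and for odd $n$ the same formulas hold with the $e_-$ terms omitted and the sums running over $k=1,\dots,(n-1)/2$.
   Context: Polar $n$-complex numbers: $u=x_0+h_1x_1+\cdots+h_{n-1}x_{n-1}$, $x_j\in\mathbb{R}$, $h_0=1$, componentwise addition, bilinear multiplication $h_jh_k=h_{(j+k)\bmod n}$. Canonical variables: $v_+=\sum_px_p$; for even $n$, $v_-=\sum_p(-1)^px_p$; $v_k=\sum_px_p\cos(2\pi kp/n)$, $\tilde v_k=\sum_px_p\sin(2\pi kp/n)$ for $k=1,\dots,\lfloor(n-1)/2\rfloor$. Canonical base: $e_+=\frac1n\sum_ph_p$, $e_-=\frac1n\sum_p(-1)^ph_p$ (even $n$), $e_k=\frac2n\sum_p\cos(2\pi kp/n)h_p$, $\tilde e_k=\frac2n\sum_p\sin(2\pi kp/n)h_p$. *)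

theory Defs
  imports Complex_Main
begin

text \<open>A polar n-complex number u = x_0 + h_1 x_1 + ... + h_(n-1) x_(n-1) is represented by
  its coordinate function x :: nat => real; only the coordinates x p with p < n are meaningful.\<close>

type_synonym pncomplex = "nat \<Rightarrow> real"

definition padd :: "pncomplex \<Rightarrow> pncomplex \<Rightarrow> pncomplex" where
  "padd u w = (\<lambda>p. u p + w p)"

definition pscale :: "real \<Rightarrow> pncomplex \<Rightarrow> pncomplex" where
  "pscale c u = (\<lambda>p. c * u p)"

definition pmul :: "nat \<Rightarrow> pncomplex \<Rightarrow> pncomplex \<Rightarrow> pncomplex" where
  "pmul n u w = (\<lambda>m. \<Sum>j<n. \<Sum>k<n. if (j + k) mod n = m then u j * w k else 0)"

definition punit :: "pncomplex" where
  "punit = (\<lambda>p. if p = 0 then 1 else 0)"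

definition ppow :: "nat \<Rightarrow> pncomplex \<Rightarrow> nat \<Rightarrow> pncomplex" where
  "ppow n u k = (pmul n u ^^ k) punit"

definition vplus :: "nat \<Rightarrow> pncomplex \<Rightarrow> real" where
  "vplus n x = (\<Sum>p<n. x p)"
definition vminus :: "nat \<Rightarrow> pncomplex \<Rightarrow> real" where
  "vminus n x = (\<Sum>p<n. (-1) ^ p * x p)"
definition vk :: "nat \<Rightarrow> pncomplex \<Rightarrow> nat \<Rightarrow> real" where
  "vk n x k = (\<Sum>p<n. x p * cos (2 * pi * real k * real p / real n))"
definition vtk :: "nat \<Rightarrow> pncomplex \<Rightarrow> nat \<Rightarrow> real" where
  "vtk n x k = (\<Sum>p<n. x p * sin (2 * pi * real k * real p / real n))"

definition eplus :: "nat \<Rightarrow> pncomplex" where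
  "eplus n = (\<lambda>p. 1 / real n)"
definition eminus :: "nat \<Rightarrow> pncomplex" where
  "eminus n = (\<lambda>p. (-1) ^ p / real n)"
definition ek :: "nat \<Rightarrow> nat \<Rightarrow> pncomplex" where
  "ek n k = (\<lambda>p. 2 / real n * cos (2 * pi * real k * real p / real n))"
definition etk :: "nat \<Rightarrow> nat \<Rightarrow> pncomplex" where
  "etk n k = (\<lambda>p. 2 / real n * sin (2 * pi * real k * real p / real n))"

definition pcos_sums :: "nat \<Rightarrow> pncomplex \<Rightarrow> pncomplex \<Rightarrow> bool" where
  "pcos_sums n u s = (\<forall>p<n. (\<lambda>j. (-1) ^ j * ppow n u (2 * j) p / fact (2 * j)) sums s p)"
definition psin_sums :: "nat \<Rightarrow> pncomplex \<Rightarrow> pncomplex \<Rightarrow> bool" where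
  "psin_sums n u s = (\<forall>p<n. (\<lambda>j. (-1) ^ j * ppow n u (2 * j + 1) p / fact (2 * j + 1)) sums s p)"

definition psum :: "(nat \<Rightarrow> pncomplex) \<Rightarrow> nat set \<Rightarrow> pncomplex" where
  "psum f A = (\<lambda>p. \<Sum>k\<in>A. f k p)"

end

theory Submission
  imports Defs "HOL-Analysis.Analysis"
begin


definition om :: "nat \<Rightarrow> complex" where "om n = cis (2*pi/real n)"
definition chi :: "nat \<Rightarrow> pncomplex \<Rightarrow> nat \<Rightarrow> complex" where
  "chi n u k = (\<Sum>p<n. of_real (u p) * om n ^ (k*p))"
definition FF :: "nat \<Rightarrow> pncomplex \<Rightarrow> nat \<Rightarrow> nat \<Rightarrow> complex" where
  "FF n u m p = (\<Sum>k<n. chi n u k ^ m * cnj (om n ^ (k*p))) / of_nat n"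

lemma om_pow: "om n ^ a = cis (2*pi*real a/real n)"
proof -
  have "om n ^ a = cis (real a * (2*pi/real n))" unfolding om_def using Complex.DeMoivre[of "2 * pi / real n" a] by assumption
  thus ?thesis by (simp add: field_simps)
qed

lemma om_n: "n > 0 \<Longrightarrow> om n ^ n = 1"
  unfolding om_pow by simp

lemma om_mod: "n > 0 \<Longrightarrow> om n ^ a = om n ^ (a mod n)"
proof -
  assume n: "n > 0"
  have "om n ^ a = om n ^ (a mod n + n * (a div n))" by simp
  also have "\<dots> = om n ^ (a mod n)" by (simp only: power_add power_mult om_n[OF n]) simp
  finally show ?thesis .
qed

lemma om_orth: assumes "0 < d" "d < n" shows "(\<Sum>k<n. om n ^ (k*d)) = 0"
proof -
  have n: "n > 0" using assms by simp
  have ne: "om n ^ d \<noteq> 1"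
  proof
    assume "om n ^ d = 1"
    hence "cos (2*pi*real d/real n) = 1" unfolding om_pow by (metis cis.sel(1) one_complex.sel(1))
    then obtain i :: int where i: "2*pi*real d/real n = real_of_int i * 2 * pi"
      using cos_one_2pi_int by blast
    hence "real d = real_of_int i * real n" using n by (simp add: field_simps)
    hence "int d = i * int n" by (metis of_int_eq_iff of_int_mult of_int_of_nat_eq)
    moreover have "i > 0"
    proof (rule ccontr)
      assume "\<not> i > 0"
      hence "i * int n \<le> 0" by (simp add: mult_nonpos_nonneg)
      thus False using \<open>int d = i * int n\<close> assms by simp
    qed
    hence "i * int n \<ge> 1 * int n" by (intro mult_right_mono) auto
    ultimately show False using assms by simp
  qed
  have "(\<Sum>k<n. om n ^ (k*d)) = (\<Sum>k<n. (om n ^ d) ^ k)"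
    by (simp add: power_mult[symmetric] mult.commute)
  also have "\<dots> = ((om n ^ d) ^ n - 1) / (om n ^ d - 1)" using ne by (rule geometric_sum)
  also have "(om n ^ d) ^ n = (om n ^ n) ^ d" by (metis power_mult mult.commute)
  also have "\<dots> = 1" by (simp add: om_n[OF n])
  finally show ?thesis by simp
qed

lemma delta_mod2:
  fixes j n p :: nat
  assumes "j < n" "p < n"
  shows "(j + (p + n - j) mod n) mod n = p"
proof -
  have "(j + (p + n - j) mod n) mod n = (j + (p + n - j)) mod n" by (simp add: mod_add_right_eq)
  also have "j + (p + n - j) = p + n" using assms by simp
  finally show ?thesis using assms by simp
qed

lemma mod_cancel_aux:
  fixes j n l :: nat
  assumes "j < n" "l < n"
  shows "((n - j) + (j + l) mod n) mod n = l"
proof -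
  have "((n - j) + (j + l) mod n) mod n = ((n - j) + (j + l)) mod n" by (simp add: mod_add_right_eq)
  also have "(n - j) + (j + l) = l + n" using assms by simp
  finally show ?thesis using assms by simp
qed

lemma delta_mod:
  fixes j n p l :: nat
  assumes "j < n" "p < n" "l < n"
  shows "((j + l) mod n = p) \<longleftrightarrow> l = (p + n - j) mod n"
proof
  assume h: "(j + l) mod n = p"
  have "l = ((n - j) + (j + l) mod n) mod n" using mod_cancel_aux[OF assms(1,3)] by simp
  also have "\<dots> = ((n - j) + (j + (p + n - j) mod n) mod n) mod n" using h delta_mod2[OF assms(1,2)] by simp
  also have "\<dots> = (p + n - j) mod n" using assms by (intro mod_cancel_aux) auto
  finally show "l = (p + n - j) mod n" .
next
  assume h: "l = (p + n - j) mod n"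
  show "(j + l) mod n = p" using h delta_mod2[OF assms(1,2)] by simp
qed


lemma om_modeq: "n > 0 \<Longrightarrow> a mod n = b mod n \<Longrightarrow> om n ^ a = om n ^ b"
  by (metis om_mod)

lemma om_unit: "cnj (om n ^ a) * om n ^ a = 1"
  by (simp add: om_pow cis_cnj cis_mult)

lemma chi_mult:
  assumes n: "n > 0"
  shows "chi n (pmul n u w) k = chi n u k * chi n w k"
proof -
  have e: "om n ^ (k * ((j + l) mod n)) = om n ^ (k * j) * om n ^ (k * l)" for j l
  proof -
    have "om n ^ (k * ((j + l) mod n)) = om n ^ (k * (j + l))"
      using n by (intro om_modeq) (auto simp: mod_mult_right_eq)
    thus ?thesis by (simp add: distrib_left power_add)
  qed
  have "chi n (pmul n u w) k = (\<Sum>m<n. \<Sum>j<n. \<Sum>l<n.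
      (if (j + l) mod n = m then of_real (u j * w l) * om n ^ (k*m) else 0))"
    unfolding chi_def pmul_def of_real_sum sum_distrib_right by (intro sum.cong refl) auto
  also have "\<dots> = (\<Sum>j<n. \<Sum>l<n. \<Sum>m<n.
      (if (j + l) mod n = m then of_real (u j * w l) * om n ^ (k*m) else 0))"
    by (subst sum.swap, rule sum.cong[OF refl], rule sum.swap)
  also have "\<dots> = (\<Sum>j<n. \<Sum>l<n. of_real (u j * w l) * om n ^ (k*((j + l) mod n)))"
    using n by (simp add: sum.delta')
  also have "\<dots> = (\<Sum>j<n. \<Sum>l<n. (of_real (u j) * om n ^ (k*j)) * (of_real (w l) * om n ^ (k*l)))"
    by (simp add: e mult_ac)
  also have "\<dots> = chi n u k * chi n w k"
    unfolding chi_def by (simp add: sum_product)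
  finally show ?thesis .
qed

lemma cnj_shift:
  assumes n: "n > 0" and j: "j < n" and p: "p < n"
  shows "cnj (om n ^ (k * ((p + n - j) mod n))) = cnj (om n ^ (k * p)) * om n ^ (k * j)"
proof -
  let ?q = "(p + n - j) mod n"
  have "om n ^ (k * ?q) * om n ^ (k * j) = om n ^ (k * (?q + j))" by (simp add: distrib_left power_add)
  also have "\<dots> = om n ^ (k * p)"
  proof (rule om_modeq[OF n])
    have "(?q + j) mod n = p" using delta_mod2[OF j p] by (simp add: add.commute)
    thus "k * (?q + j) mod n = k * p mod n" by (metis mod_mult_right_eq)
  qed
  finally have h: "om n ^ (k * ?q) * om n ^ (k * j) = om n ^ (k * p)" .
  have "cnj (om n ^ (k * p)) * om n ^ (k * j) = cnj (om n ^ (k * ?q)) * (cnj (om n ^ (k * j)) * om n ^ (k * j))"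
    by (simp add: h[symmetric] mult_ac)
  also have "\<dots> = cnj (om n ^ (k * ?q))" by (simp only: om_unit mult_1_right)
  finally show ?thesis by simp
qed

lemma ppow_Suc: "ppow n u (Suc m) = pmul n u (ppow n u m)"
  unfolding ppow_def by simp

lemma swap_aux: "(\<Sum>j<n. \<Sum>k<n. A k * (of_real (u j) * om n ^ (k*j))) = (\<Sum>k<n. A k * chi n u k)"
  unfolding chi_def by (subst sum.swap) (simp add: sum_distrib_left)

lemma ppow_F:
  assumes n: "n > 0"
  shows "p < n \<Longrightarrow> of_real (ppow n u m p) = FF n u m p"
proof (induction m arbitrary: p)
  case 0
  show ?case
  proof (cases "p = 0")
    case True
    thus ?thesis using n by (simp add: ppow_def punit_def FF_def)
  next
    case False
    have "(\<Sum>k<n. cnj (om n ^ (k * p))) = cnj (\<Sum>k<n. om n ^ (k * p))" by simp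
    also have "\<dots> = 0" using False 0 by (simp add: om_orth)
    finally show ?thesis using False by (simp add: ppow_def punit_def FF_def)
  qed
next
  case (Suc m)
  have "of_real (ppow n u (Suc m) p) = (\<Sum>j<n. \<Sum>l<n.
      (if (j + l) mod n = p then of_real (u j) * of_real (ppow n u m l) else (0::complex)))"
    unfolding ppow_Suc pmul_def of_real_sum by (intro sum.cong refl) auto
  also have "\<dots> = (\<Sum>j<n. \<Sum>l<n.
      (if (p + n - j) mod n = l then of_real (u j) * FF n u m l else 0))"
    using Suc by (intro sum.cong refl) (auto simp: delta_mod)
  also have "\<dots> = (\<Sum>j<n. of_real (u j) * FF n u m ((p + n - j) mod n))"
    using n by (simp add: sum.delta')
  also have "\<dots> = (\<Sum>j<n. of_real (u j) * ((\<Sum>k<n. chi n u k ^ m * (cnj (om n ^ (k * p)) * om n ^ (k * j))) / of_nat n))"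
    unfolding FF_def
    by (intro sum.cong refl) (simp add: cnj_shift[OF n _ Suc.prems] del: complex_cnj_power)
  also have "\<dots> = (\<Sum>j<n. \<Sum>k<n. chi n u k ^ m * cnj (om n ^ (k * p)) * (of_real (u j) * om n ^ (k * j))) / of_nat n"
    by (simp add: sum_divide_distrib sum_distrib_left mult_ac del: complex_cnj_power)
  also have "\<dots> = (\<Sum>k<n. (chi n u k ^ m * cnj (om n ^ (k * p))) * chi n u k) / of_nat n"
    by (simp only: swap_aux)
  also have "\<dots> = FF n u (Suc m) p"
    unfolding FF_def by (simp add: mult_ac del: complex_cnj_power)
  finally show ?case .
qed


definition cc :: "nat \<Rightarrow> nat \<Rightarrow> nat \<Rightarrow> real" where
  "cc n k p = cos (2 * pi * real k * real p / real n)"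
definition ss :: "nat \<Rightarrow> nat \<Rightarrow> nat \<Rightarrow> real" where
  "ss n k p = sin (2 * pi * real k * real p / real n)"


lemma trig_2pi_sub:
  "cos (2*pi*real p - x) = cos x" "sin (2*pi*real p - x) = - sin x"
proof -
  have a: "cos (2*pi*real p) = 1" "sin (2*pi*real p) = 0"
    using cos_2npi[of p] sin_2npi[of p] by (simp_all add: mult_ac)
  show "cos (2*pi*real p - x) = cos x" "sin (2*pi*real p - x) = - sin x"
    by (simp_all add: cos_diff sin_diff a)
qed

lemma angle_sub:
  assumes "k \<le> n" "n > 0"
  shows "2 * pi * real (n - k) * real p / real n = 2*pi*real p - 2 * pi * real k * real p / real n"
  using assms by (simp add: of_nat_diff field_simps)

lemma cc_sym: "k \<le> n \<Longrightarrow> n > 0 \<Longrightarrow> cc n (n-k) p = cc n k p"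
  unfolding cc_def by (simp only: angle_sub trig_2pi_sub)

lemma ss_sym: "k \<le> n \<Longrightarrow> n > 0 \<Longrightarrow> ss n (n-k) p = - ss n k p"
  unfolding ss_def by (simp only: angle_sub trig_2pi_sub)

lemma vk_sym: "k \<le> n \<Longrightarrow> n > 0 \<Longrightarrow> vk n u (n-k) = vk n u k"
  unfolding vk_def using cc_sym[unfolded cc_def] by (intro sum.cong refl) simp

lemma vtk_sym: "k \<le> n \<Longrightarrow> n > 0 \<Longrightarrow> vtk n u (n-k) = - vtk n u k"
  unfolding vtk_def using ss_sym[unfolded ss_def] by (simp add: sum_negf)

lemma pair_odd:
  fixes g :: "nat \<Rightarrow> real"
  assumes "odd n" and sym: "\<And>k. 0 < k \<Longrightarrow> k < n \<Longrightarrow> g (n - k) = g k"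
  shows "(\<Sum>k<n. g k) = g 0 + 2 * (\<Sum>k\<in>{1..(n-1) div 2}. g k)"
proof -
  obtain m where n: "n = 2*m+1" using assms(1) oddE by blast
  have md: "(n-1) div 2 = m" using n by simp
  have split: "{..<n} = insert 0 ({1..m} \<union> {m+1..2*m})" using n by auto
  have sym2: "g (Suc (2 * m) - a) = g a" if "Suc m \<le> a" "a \<le> 2 * m" for a
  proof -
    have "g (n - a) = g a" using that n by (intro sym) auto
    thus ?thesis using n by simp
  qed
  have r: "(\<Sum>k\<in>{m+1..2*m}. g k) = (\<Sum>k\<in>{1..m}. g k)"
    by (rule sum.reindex_bij_witness[of _ "\<lambda>k. n - k" "\<lambda>k. n - k"]) (auto simp: n sym2)
  have "(\<Sum>k<n. g k) = g 0 + ((\<Sum>k\<in>{1..m}. g k) + (\<Sum>k\<in>{m+1..2*m}. g k))"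
    unfolding split by (subst sum.insert) (auto simp: sum.union_disjoint)
  thus ?thesis using r md by simp
qed

lemma pair_even:
  fixes g :: "nat \<Rightarrow> real"
  assumes "even n" "n \<ge> 2" and sym: "\<And>k. 0 < k \<Longrightarrow> k < n \<Longrightarrow> g (n - k) = g k"
  shows "(\<Sum>k<n. g k) = g 0 + g (n div 2) + 2 * (\<Sum>k\<in>{1..n div 2 - 1}. g k)"
proof -
  obtain k where k: "n = 2*k" using assms(1) by blast
  define m where "m = k - 1"
  have n: "n = 2*m+2" using k assms(2) unfolding m_def by simp
  have md: "n div 2 - 1 = m" "n div 2 = m + 1" using n by simp_all
  have split: "{..<n} = insert 0 (insert (m+1) ({1..m} \<union> {m+2..2*m+1}))" using n by auto
  have sym2: "g (Suc (Suc (2 * m)) - a) = g a" if "Suc (Suc m) \<le> a" "a \<le> Suc (2 * m)" for a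
  proof -
    have "g (n - a) = g a" using that n by (intro sym) auto
    thus ?thesis using n by simp
  qed
  have r: "(\<Sum>k\<in>{m+2..2*m+1}. g k) = (\<Sum>k\<in>{1..m}. g k)"
    by (rule sum.reindex_bij_witness[of _ "\<lambda>k. n - k" "\<lambda>k. n - k"]) (auto simp: n sym2)
  have "(\<Sum>k<n. g k) = g 0 + (g (m+1) + ((\<Sum>k\<in>{1..m}. g k) + (\<Sum>k\<in>{m+2..2*m+1}. g k)))"
    unfolding split by (subst sum.insert, simp, simp, subst sum.insert) (auto simp: sum.union_disjoint)
  thus ?thesis using r md by simp
qed


lemma cc0: "cc n 0 p = 1" and ss0: "ss n 0 p = 0" by (simp_all add: cc_def ss_def)

lemma half_angle:
  assumes "even n" "n > 0"
  shows "2 * pi * real (n div 2) * real p / real n = real p * pi"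
proof -
  obtain k where k: "n = 2*k" using assms(1) by blast
  show ?thesis using assms(2) unfolding k by (simp add: field_simps)
qed

lemma cc_half: "even n \<Longrightarrow> n > 0 \<Longrightarrow> cc n (n div 2) p = (-1)^p"
  unfolding cc_def by (simp only: half_angle cos_npi)
lemma ss_half: "even n \<Longrightarrow> n > 0 \<Longrightarrow> ss n (n div 2) p = 0"
  unfolding ss_def by (simp only: half_angle sin_npi)

lemma combine_even:
  fixes A B :: "nat \<Rightarrow> real"
  assumes n: "even n" "n \<ge> 2"
    and symA: "\<And>k. 0 < k \<Longrightarrow> k < n \<Longrightarrow> A (n - k) = A k"
    and symB: "\<And>k. 0 < k \<Longrightarrow> k < n \<Longrightarrow> B (n - k) = - B k"
    and a0: "A 0 = a0" and am: "A (n div 2) = am"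
  shows "(\<Sum>k<n. cc n k p * A k + ss n k p * B k) / real n =
    a0 * (1 / real n) + (am * ((-1)^p / real n) +
     (\<Sum>k\<in>{1..n div 2 - 1}. A k * (2 / real n * cos (2 * pi * real k * real p / real n))
          + B k * (2 / real n * sin (2 * pi * real k * real p / real n))))"
proof -
  let ?g = "\<lambda>k. cc n k p * A k + ss n k p * B k"
  have sym: "?g (n - k) = ?g k" if "0 < k" "k < n" for k
    using that n by (simp add: cc_sym ss_sym symA symB)
  have "(\<Sum>k<n. ?g k) = ?g 0 + ?g (n div 2) + 2 * (\<Sum>k\<in>{1..n div 2 - 1}. ?g k)"
    using pair_even[of n ?g] n sym by blast
  also have "?g 0 = a0" by (simp add: cc0 ss0 a0)
  also have "?g (n div 2) = am * (-1)^p" using n by (simp add: cc_half ss_half am)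
  finally have e: "(\<Sum>k<n. ?g k) = a0 + am * (-1)^p + 2 * (\<Sum>k\<in>{1..n div 2 - 1}. ?g k)" .
  have s: "(\<Sum>k\<in>{1..n div 2 - 1}. A k * (2 / real n * cos (2 * pi * real k * real p / real n))
          + B k * (2 / real n * sin (2 * pi * real k * real p / real n))) =
        2 / real n * (\<Sum>k\<in>{1..n div 2 - 1}. ?g k)"
    by (simp add: sum_distrib_left cc_def ss_def algebra_simps)
  show ?thesis unfolding e s using n by (simp add: field_simps)
qed

lemma combine_odd:
  fixes A B :: "nat \<Rightarrow> real"
  assumes n: "odd n"
    and symA: "\<And>k. 0 < k \<Longrightarrow> k < n \<Longrightarrow> A (n - k) = A k"
    and symB: "\<And>k. 0 < k \<Longrightarrow> k < n \<Longrightarrow> B (n - k) = - B k"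
    and a0: "A 0 = a0"
  shows "(\<Sum>k<n. cc n k p * A k + ss n k p * B k) / real n =
    a0 * (1 / real n) +
     (\<Sum>k\<in>{1..(n - 1) div 2}. A k * (2 / real n * cos (2 * pi * real k * real p / real n))
          + B k * (2 / real n * sin (2 * pi * real k * real p / real n)))"
proof -
  let ?g = "\<lambda>k. cc n k p * A k + ss n k p * B k"
  have n0: "n > 0" using n by (cases n) auto
  have sym: "?g (n - k) = ?g k" if "0 < k" "k < n" for k
    using that n0 by (simp add: cc_sym ss_sym symA symB)
  have "(\<Sum>k<n. ?g k) = ?g 0 + 2 * (\<Sum>k\<in>{1..(n - 1) div 2}. ?g k)"
    using pair_odd[of n ?g] n sym by blast
  also have "?g 0 = a0" by (simp add: cc0 ss0 a0)
  finally have e: "(\<Sum>k<n. ?g k) = a0 + 2 * (\<Sum>k\<in>{1..(n - 1) div 2}. ?g k)" .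
  have s: "(\<Sum>k\<in>{1..(n - 1) div 2}. A k * (2 / real n * cos (2 * pi * real k * real p / real n))
          + B k * (2 / real n * sin (2 * pi * real k * real p / real n))) =
        2 / real n * (\<Sum>k\<in>{1..(n - 1) div 2}. ?g k)"
    by (simp add: sum_distrib_left cc_def ss_def algebra_simps)
  show ?thesis unfolding e s using n0 by (simp add: field_simps)
qed

lemma vk0: "vk n u 0 = vplus n u" and vtk0: "vtk n u 0 = 0"
  by (simp_all add: vk_def vtk_def vplus_def)

lemma vk_half: "even n \<Longrightarrow> n > 0 \<Longrightarrow> vk n u (n div 2) = vminus n u"
  using cc_half[unfolded cc_def] unfolding vk_def vminus_def by (simp add: mult.commute)
lemma vtk_half: "even n \<Longrightarrow> n > 0 \<Longrightarrow> vtk n u (n div 2) = 0"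
  using ss_half[unfolded ss_def] unfolding vtk_def by simp



lemma cos_paired_c: "(\<lambda>j. of_real ((-1)^j / fact (2*j)) * z^(2*j)) sums cos (z::complex)"
proof -
  have "(\<lambda>n. \<Sum>k = n * 2..<n * 2 + 2. of_real (cos_coeff k) * z ^ k) sums cos z"
    by (rule sums_group) (use cos_converges [of z, unfolded scaleR_conv_of_real] in auto)
  then show ?thesis
    by (simp add: cos_coeff_def ac_simps)
qed

lemma sin_paired_c: "(\<lambda>j. of_real ((-1)^j / fact (2*j+1)) * z^(2*j+1)) sums sin (z::complex)"
proof -
  have "(\<lambda>n. \<Sum>k = n * 2..<n * 2 + 2. of_real (sin_coeff k) * z ^ k) sums sin z"
    by (rule sums_group) (use sin_converges [of z, unfolded scaleR_conv_of_real] in auto)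
  then show ?thesis
    by (simp add: sin_coeff_def ac_simps)
qed

lemma chi_Re: "Re (chi n u k) = vk n u k"
  unfolding chi_def vk_def by (simp add: om_pow mult_ac)

lemma chi_Im: "Im (chi n u k) = vtk n u k"
  unfolding chi_def vtk_def by (simp add: om_pow mult_ac)

lemma cos_series:
  assumes n: "n > 0" and p: "p < n"
  shows "(\<lambda>j. (-1) ^ j * ppow n u (2 * j) p / fact (2 * j)) sums
     Re ((\<Sum>k<n. cnj (om n ^ (k*p)) * cos (chi n u k)) / of_nat n)"
proof -
  have "(\<lambda>j. (\<Sum>k<n. cnj (om n ^ (k*p)) * (of_real ((-1)^j / fact (2*j)) * chi n u k ^ (2*j))) / of_nat n)
      sums ((\<Sum>k<n. cnj (om n ^ (k*p)) * cos (chi n u k)) / of_nat n)"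
    by (intro sums_divide sums_sum sums_mult cos_paired_c)
  moreover have "(\<Sum>k<n. cnj (om n ^ (k*p)) * (of_real ((-1)^j / fact (2*j)) * chi n u k ^ (2*j))) / of_nat n
      = of_real ((-1) ^ j * ppow n u (2 * j) p / fact (2 * j))" for j
    using ppow_F[OF n p, of u "2*j"]
    by (simp add: FF_def sum_distrib_left sum_divide_distrib mult_ac del: complex_cnj_power)
  ultimately have "(\<lambda>j. of_real ((-1) ^ j * ppow n u (2 * j) p / fact (2 * j)))
      sums ((\<Sum>k<n. cnj (om n ^ (k*p)) * cos (chi n u k)) / of_nat n)" by simp
  from sums_Re[OF this] show ?thesis by (simp only: Re_complex_of_real)
qed

lemma sin_series:
  assumes n: "n > 0" and p: "p < n"
  shows "(\<lambda>j. (-1) ^ j * ppow n u (2 * j + 1) p / fact (2 * j + 1)) sums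
     Re ((\<Sum>k<n. cnj (om n ^ (k*p)) * sin (chi n u k)) / of_nat n)"
proof -
  have "(\<lambda>j. (\<Sum>k<n. cnj (om n ^ (k*p)) * (of_real ((-1)^j / fact (2*j+1)) * chi n u k ^ (2*j+1))) / of_nat n)
      sums ((\<Sum>k<n. cnj (om n ^ (k*p)) * sin (chi n u k)) / of_nat n)"
    by (intro sums_divide sums_sum sums_mult sin_paired_c)
  moreover have "(\<Sum>k<n. cnj (om n ^ (k*p)) * (of_real ((-1)^j / fact (2*j+1)) * chi n u k ^ (2*j+1))) / of_nat n
      = of_real ((-1) ^ j * ppow n u (2 * j + 1) p / fact (2 * j + 1))" for j
    using ppow_F[OF n p, of u "2*j+1"]
    by (simp add: FF_def sum_distrib_left sum_divide_distrib mult_ac del: complex_cnj_power)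
  ultimately have "(\<lambda>j. of_real ((-1) ^ j * ppow n u (2 * j + 1) p / fact (2 * j + 1)))
      sums ((\<Sum>k<n. cnj (om n ^ (k*p)) * sin (chi n u k)) / of_nat n)" by simp
  from sums_Re[OF this] show ?thesis by (simp only: Re_complex_of_real)
qed

lemma Re_cnj_om: "Re (cnj (om n ^ (k*p)) * w) = cc n k p * Re w + ss n k p * Im w"
  by (simp add: om_pow cc_def ss_def mult_ac)

lemma cos_term: "Re (cnj (om n ^ (k*p)) * cos (chi n u k)) = cc n k p * (cos (vk n u k) * cosh (vtk n u k)) + ss n k p * (- (sin (vk n u k) * sinh (vtk n u k)))"
  by (simp only: Re_cnj_om) (simp add: Re_cos Im_cos chi_Re chi_Im cosh_def sinh_def real_scaleR_def field_simps)

lemma cos_Re_eq: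
  "Re ((\<Sum>k<n. cnj (om n ^ (k*p)) * cos (chi n u k)) / of_nat n) =
   (\<Sum>k<n. cc n k p * (cos (vk n u k) * cosh (vtk n u k)) + ss n k p * (- (sin (vk n u k) * sinh (vtk n u k)))) / real n"
  by (simp only: Re_divide_of_nat Re_sum cos_term)

lemma sin_term: "Re (cnj (om n ^ (k*p)) * sin (chi n u k)) = cc n k p * (sin (vk n u k) * cosh (vtk n u k)) + ss n k p * (cos (vk n u k) * sinh (vtk n u k))"
  by (simp only: Re_cnj_om) (simp add: Re_sin Im_sin chi_Re chi_Im cosh_def sinh_def real_scaleR_def field_simps)

lemma sin_Re_eq:
  "Re ((\<Sum>k<n. cnj (om n ^ (k*p)) * sin (chi n u k)) / of_nat n) =
   (\<Sum>k<n. cc n k p * (sin (vk n u k) * cosh (vtk n u k)) + ss n k p * (cos (vk n u k) * sinh (vtk n u k))) / real n"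
  by (simp only: Re_divide_of_nat Re_sum sin_term)


theorem mainTheorem13:
  fixes n :: nat and u :: pncomplex
  assumes "n \<ge> 2"
  shows "(even n \<longrightarrow>
      pcos_sums n u
        (padd (pscale (cos (vplus n u)) (eplus n))
          (padd (pscale (cos (vminus n u)) (eminus n))
            (psum (\<lambda>k. padd (pscale (cos (vk n u k) * cosh (vtk n u k)) (ek n k))
                             (pscale (- (sin (vk n u k) * sinh (vtk n u k))) (etk n k)))
                  {1..n div 2 - 1})))
    \<and> psin_sums n u
        (padd (pscale (sin (vplus n u)) (eplus n))
          (padd (pscale (sin (vminus n u)) (eminus n))
            (psum (\<lambda>k. padd (pscale (sin (vk n u k) * cosh (vtk n u k)) (ek n k))
                             (pscale (cos (vk n u k) * sinh (vtk n u k)) (etk n k)))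
                  {1..n div 2 - 1}))))
    \<and> (odd n \<longrightarrow>
      pcos_sums n u
        (padd (pscale (cos (vplus n u)) (eplus n))
            (psum (\<lambda>k. padd (pscale (cos (vk n u k) * cosh (vtk n u k)) (ek n k))
                             (pscale (- (sin (vk n u k) * sinh (vtk n u k))) (etk n k)))
                  {1..(n - 1) div 2}))
    \<and> psin_sums n u
        (padd (pscale (sin (vplus n u)) (eplus n))
            (psum (\<lambda>k. padd (pscale (sin (vk n u k) * cosh (vtk n u k)) (ek n k))
                             (pscale (cos (vk n u k) * sinh (vtk n u k)) (etk n k)))
                  {1..(n - 1) div 2})))"
  proof -
  have n0: "n > 0" using assms by simp
  have symA1: "cos (vk n u (n - k)) * cosh (vtk n u (n - k)) = cos (vk n u k) * cosh (vtk n u k)"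
    and symB1: "- (sin (vk n u (n - k)) * sinh (vtk n u (n - k))) = - (- (sin (vk n u k) * sinh (vtk n u k)))"
    and symA2: "sin (vk n u (n - k)) * cosh (vtk n u (n - k)) = sin (vk n u k) * cosh (vtk n u k)"
    and symB2: "cos (vk n u (n - k)) * sinh (vtk n u (n - k)) = - (cos (vk n u k) * sinh (vtk n u k))"
    if "0 < k" "k < n" for k
    using that n0 by (simp_all add: vk_sym vtk_sym)
  have cosS: "(\<lambda>j. (-1) ^ j * ppow n u (2 * j) p / fact (2 * j)) sums
     ((\<Sum>k<n. cc n k p * (cos (vk n u k) * cosh (vtk n u k)) + ss n k p * (- (sin (vk n u k) * sinh (vtk n u k)))) / real n)"
    if p: "p < n" for p
    using cos_series[OF n0 p, of u] by (simp only: cos_Re_eq)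
  have sinS: "(\<lambda>j. (-1) ^ j * ppow n u (2 * j + 1) p / fact (2 * j + 1)) sums
     ((\<Sum>k<n. cc n k p * (sin (vk n u k) * cosh (vtk n u k)) + ss n k p * (cos (vk n u k) * sinh (vtk n u k))) / real n)"
    if p: "p < n" for p
    using sin_series[OF n0 p, of u] by (simp only: sin_Re_eq)
  show ?thesis
  proof (intro conjI impI)
    assume ev: "even n"
    show "pcos_sums n u
        (padd (pscale (cos (vplus n u)) (eplus n))
          (padd (pscale (cos (vminus n u)) (eminus n))
            (psum (\<lambda>k. padd (pscale (cos (vk n u k) * cosh (vtk n u k)) (ek n k))
                             (pscale (- (sin (vk n u k) * sinh (vtk n u k))) (etk n k)))
                  {1..n div 2 - 1})))"
      unfolding pcos_sums_def
    proof (intro allI impI)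
      fix p assume p: "p < n"
      have "(\<Sum>k<n. cc n k p * (cos (vk n u k) * cosh (vtk n u k)) + ss n k p * (- (sin (vk n u k) * sinh (vtk n u k)))) / real n
        = cos (vplus n u) * (1 / real n) + (cos (vminus n u) * ((-1)^p / real n) +
          (\<Sum>k\<in>{1..n div 2 - 1}. (cos (vk n u k) * cosh (vtk n u k)) * (2 / real n * cos (2 * pi * real k * real p / real n))
          + (- (sin (vk n u k) * sinh (vtk n u k))) * (2 / real n * sin (2 * pi * real k * real p / real n))))"
        by (rule combine_even[where A = "\<lambda>k. cos (vk n u k) * cosh (vtk n u k)" and B = "\<lambda>k. - (sin (vk n u k) * sinh (vtk n u k))"])
           (use ev assms n0 symA1 symB1 in \<open>auto simp: vk0 vtk0 vk_half vtk_half\<close>)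
      with cosS[OF p] show "(\<lambda>j. (-1) ^ j * ppow n u (2 * j) p / fact (2 * j)) sums
        padd (pscale (cos (vplus n u)) (eplus n))
          (padd (pscale (cos (vminus n u)) (eminus n))
            (psum (\<lambda>k. padd (pscale (cos (vk n u k) * cosh (vtk n u k)) (ek n k))
                             (pscale (- (sin (vk n u k) * sinh (vtk n u k))) (etk n k)))
                  {1..n div 2 - 1})) p"
        by (simp add: padd_def pscale_def psum_def eplus_def eminus_def ek_def etk_def)
    qed
  next
    assume ev: "even n"
    show "psin_sums n u
        (padd (pscale (sin (vplus n u)) (eplus n))
          (padd (pscale (sin (vminus n u)) (eminus n))
            (psum (\<lambda>k. padd (pscale (sin (vk n u k) * cosh (vtk n u k)) (ek n k))
                             (pscale (cos (vk n u k) * sinh (vtk n u k)) (etk n k)))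
                  {1..n div 2 - 1})))"
      unfolding psin_sums_def
    proof (intro allI impI)
      fix p assume p: "p < n"
      have "(\<Sum>k<n. cc n k p * (sin (vk n u k) * cosh (vtk n u k)) + ss n k p * (cos (vk n u k) * sinh (vtk n u k))) / real n
        = sin (vplus n u) * (1 / real n) + (sin (vminus n u) * ((-1)^p / real n) +
          (\<Sum>k\<in>{1..n div 2 - 1}. (sin (vk n u k) * cosh (vtk n u k)) * (2 / real n * cos (2 * pi * real k * real p / real n))
          + (cos (vk n u k) * sinh (vtk n u k)) * (2 / real n * sin (2 * pi * real k * real p / real n))))"
        by (rule combine_even[where A = "\<lambda>k. sin (vk n u k) * cosh (vtk n u k)" and B = "\<lambda>k. cos (vk n u k) * sinh (vtk n u k)"])
           (use ev assms n0 symA2 symB2 in \<open>auto simp: vk0 vtk0 vk_half vtk_half\<close>)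
      with sinS[OF p] show "(\<lambda>j. (-1) ^ j * ppow n u (2 * j + 1) p / fact (2 * j + 1)) sums
        padd (pscale (sin (vplus n u)) (eplus n))
          (padd (pscale (sin (vminus n u)) (eminus n))
            (psum (\<lambda>k. padd (pscale (sin (vk n u k) * cosh (vtk n u k)) (ek n k))
                             (pscale (cos (vk n u k) * sinh (vtk n u k)) (etk n k)))
                  {1..n div 2 - 1})) p"
        by (simp add: padd_def pscale_def psum_def eplus_def eminus_def ek_def etk_def)
    qed
  next
    assume od: "odd n"
    show "pcos_sums n u
        (padd (pscale (cos (vplus n u)) (eplus n))
            (psum (\<lambda>k. padd (pscale (cos (vk n u k) * cosh (vtk n u k)) (ek n k))
                             (pscale (- (sin (vk n u k) * sinh (vtk n u k))) (etk n k)))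
                  {1..(n - 1) div 2}))"
      unfolding pcos_sums_def
    proof (intro allI impI)
      fix p assume p: "p < n"
      have "(\<Sum>k<n. cc n k p * (cos (vk n u k) * cosh (vtk n u k)) + ss n k p * (- (sin (vk n u k) * sinh (vtk n u k)))) / real n
        = cos (vplus n u) * (1 / real n) +
          (\<Sum>k\<in>{1..(n - 1) div 2}. (cos (vk n u k) * cosh (vtk n u k)) * (2 / real n * cos (2 * pi * real k * real p / real n))
          + (- (sin (vk n u k) * sinh (vtk n u k))) * (2 / real n * sin (2 * pi * real k * real p / real n)))"
        by (rule combine_odd[where A = "\<lambda>k. cos (vk n u k) * cosh (vtk n u k)" and B = "\<lambda>k. - (sin (vk n u k) * sinh (vtk n u k))"])
           (use od n0 symA1 symB1 in \<open>auto simp: vk0 vtk0\<close>)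
      with cosS[OF p] show "(\<lambda>j. (-1) ^ j * ppow n u (2 * j) p / fact (2 * j)) sums
        padd (pscale (cos (vplus n u)) (eplus n))
            (psum (\<lambda>k. padd (pscale (cos (vk n u k) * cosh (vtk n u k)) (ek n k))
                             (pscale (- (sin (vk n u k) * sinh (vtk n u k))) (etk n k)))
                  {1..(n - 1) div 2}) p"
        by (simp add: padd_def pscale_def psum_def eplus_def ek_def etk_def)
    qed
  next
    assume od: "odd n"
    show "psin_sums n u
        (padd (pscale (sin (vplus n u)) (eplus n))
            (psum (\<lambda>k. padd (pscale (sin (vk n u k) * cosh (vtk n u k)) (ek n k))
                             (pscale (cos (vk n u k) * sinh (vtk n u k)) (etk n k)))
                  {1..(n - 1) div 2}))"
      unfolding psin_sums_def
    proof (intro allI impI)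
      fix p assume p: "p < n"
      have "(\<Sum>k<n. cc n k p * (sin (vk n u k) * cosh (vtk n u k)) + ss n k p * (cos (vk n u k) * sinh (vtk n u k))) / real n
        = sin (vplus n u) * (1 / real n) +
          (\<Sum>k\<in>{1..(n - 1) div 2}. (sin (vk n u k) * cosh (vtk n u k)) * (2 / real n * cos (2 * pi * real k * real p / real n))
          + (cos (vk n u k) * sinh (vtk n u k)) * (2 / real n * sin (2 * pi * real k * real p / real n)))"
        by (rule combine_odd[where A = "\<lambda>k. sin (vk n u k) * cosh (vtk n u k)" and B = "\<lambda>k. cos (vk n u k) * sinh (vtk n u k)"])
           (use od n0 symA2 symB2 in \<open>auto simp: vk0 vtk0\<close>)
      with sinS[OF p] show "(\<lambda>j. (-1) ^ j * ppow n u (2 * j + 1) p / fact (2 * j + 1)) sums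
        padd (pscale (sin (vplus n u)) (eplus n))
            (psum (\<lambda>k. padd (pscale (sin (vk n u k) * cosh (vtk n u k)) (ek n k))
                             (pscale (cos (vk n u k) * sinh (vtk n u k)) (etk n k)))
                  {1..(n - 1) div 2}) p"
        by (simp add: padd_def pscale_def psum_def eplus_def ek_def etk_def)
    qed
  qed
qed

end
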